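(* Let $f:[a,b]\to\mathbb F$ and assume that $f^*:[a,b]\to\mathbb F$, $f^*(s)=f(s^* )$, is $g$-continuous on $[a,b]$. Then $f$ is $g$-continuous on $[a,b]$ if and only if $f(t)=f(s)$ for all $t,s\in[a,b]$ with $g(t)=g(s)$.
   Context: Let $g:\mathbb R\to\mathbb R$ be nondecreasing and left-continuous, $\mathbb F\in\{\mathbb R,\mathbb C\}$. $\Delta g(t)=g(t^+)-g(t)$, $D_g=\{t:\Delta g(t)>0\}$, $C_g=\{t: g\text{ constant on }(t-\varepsilon,t+\varepsilon)\text{ for some }\varepsilon>0\}=\bigcup_{n\in\Lambda}(a_n,b_n)$ (disjoint union of connected components), $N_g^-=\{a_n\}\setminus D_g$, $N_g^+=\{b_n\}\setminus D_g$. Fix $a<b$ with $a\notin N_g^-\cup D_g$, $b\notin D_g\cup C_g\cup N_g^+$. For $s\in[a,b]$, $s^*=s$ if $s\notin C_g$ and $s^*=b_n$ if $s\in(a_n,b_n)$. A function $u:D\subset\mathbb R\to\mathbb F$ is $g$-continuous at $t\in D$ if for every $\varepsilon>0$ there is $\delta>0$ with $|u(t)-u(s)|<\varepsilon$ for all $s\in D$ with $|g(t)-g(s)|<\delta$; it is $g$-continuous on $D$ if this holds at every $t\in D$. *)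

theory Defs
  imports "HOL-Analysis.Analysis"
begin

definition jump :: "(real \<Rightarrow> real) \<Rightarrow> real \<Rightarrow> real" where
  "jump g t = Lim (at_right t) g - g t"

definition Dg :: "(real \<Rightarrow> real) \<Rightarrow> real set" where
  "Dg g = {t. jump g t > 0}"

definition Cg :: "(real \<Rightarrow> real) \<Rightarrow> real set" where
  "Cg g = {t. \<exists>\<epsilon>>0. \<forall>s\<in>{t-\<epsilon><..<t+\<epsilon>}. g s = g t}"

text \<open>Left endpoints a_n (resp. right endpoints b_n) of the connected components
  (a_n,b_n) of the open set C_g.\<close>
definition left_ends :: "(real \<Rightarrow> real) \<Rightarrow> real set" where
  "left_ends g = {a. a \<notin> Cg g \<and> (\<exists>b>a. {a<..<b} \<subseteq> Cg g)}"

definition right_ends :: "(real \<Rightarrow> real) \<Rightarrow> real set" where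
  "right_ends g = {b. b \<notin> Cg g \<and> (\<exists>a<b. {a<..<b} \<subseteq> Cg g)}"

definition Ng_minus :: "(real \<Rightarrow> real) \<Rightarrow> real set" where
  "Ng_minus g = left_ends g - Dg g"

definition Ng_plus :: "(real \<Rightarrow> real) \<Rightarrow> real set" where
  "Ng_plus g = right_ends g - Dg g"

definition star :: "(real \<Rightarrow> real) \<Rightarrow> real \<Rightarrow> real" where
  "star g s = (if s \<notin> Cg g then s
               else (THE b. s < b \<and> b \<notin> Cg g \<and> {s..<b} \<subseteq> Cg g))"

definition g_continuous_at ::
    "(real \<Rightarrow> real) \<Rightarrow> real set \<Rightarrow> (real \<Rightarrow> 'a::metric_space) \<Rightarrow> real \<Rightarrow> bool" where
  "g_continuous_at g D u t \<longleftrightarrow>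
     (\<forall>\<epsilon>>0. \<exists>\<delta>>0. \<forall>s\<in>D. \<bar>g t - g s\<bar> < \<delta> \<longrightarrow> dist (u t) (u s) < \<epsilon>)"

definition g_continuous_on ::
    "(real \<Rightarrow> real) \<Rightarrow> real set \<Rightarrow> (real \<Rightarrow> 'a::metric_space) \<Rightarrow> bool" where
  "g_continuous_on g D u \<longleftrightarrow> (\<forall>t\<in>D. g_continuous_at g D u t)"

end

theory Submission
  imports Defs
begin

lemma Cg_open: "open (Cg g)"
proof (rule openI)
  fix t assume "t \<in> Cg g"
  then obtain e where e: "e > 0" "\<forall>s\<in>{t-e<..<t+e}. g s = g t" unfolding Cg_def by blast
  show "\<exists>e>0. ball t e \<subseteq> Cg g"
  proof (intro exI conjI subsetI)
    show "e > 0" by fact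
    fix u assume u: "u \<in> ball t e"
    hence "dist t u < e" by simp
    hence "\<bar>t - u\<bar> < e" by (simp only: dist_real_def)
    hence d: "\<bar>u - t\<bar> < e" by (metis abs_minus_commute)
    have "u \<in> {t-e<..<t+e}" using d by (simp add: abs_less_iff)
    hence gu: "g u = g t" using e(2) by blast
    show "u \<in> Cg g" unfolding Cg_def
    proof (intro CollectI exI[of _ "e - \<bar>u-t\<bar>"] conjI ballI)
      show "0 < e - \<bar>u - t\<bar>" using d by simp
      fix w assume "w \<in> {u - (e - \<bar>u - t\<bar>)<..<u + (e - \<bar>u - t\<bar>)}"
      hence "w \<in> {t-e<..<t+e}" using d by (cases "0 \<le> u - t") auto
      hence "g w = g t" using e(2) by blast
      thus "g w = g u" using gu by simp
    qed
  qed
qed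

lemma Cg_deriv:
  assumes "x \<in> Cg g"
  shows "(g has_field_derivative 0) (at x within S)"
proof -
  from assms obtain e where e: "e > 0" "\<forall>s\<in>{x-e<..<x+e}. g s = g x" unfolding Cg_def by blast
  have D: "((\<lambda>_. g x) has_field_derivative 0) (at x)" by (rule DERIV_const)
  have S: "g x = g y" if "y \<in> {x-e<..<x+e}" for y
  proof -
    have "g y = g x" using e(2) that by blast
    thus ?thesis by (rule sym)
  qed
  have xin: "x \<in> {x-e<..<x+e}" using e(1) by auto
  have "(g has_field_derivative 0) (at x)"
    by (rule has_field_derivative_transform_within_open[OF D open_greaterThanLessThan xin S])
  thus ?thesis by (rule has_field_derivative_at_within)
qed

lemma star_props:
  assumes nb: "b \<notin> Cg g" and sb: "s \<le> b" and lc: "\<forall>t. continuous (at_left t) g"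
  shows "s \<le> star g s \<and> star g s \<le> b \<and> g (star g s) = g s"
proof (cases "s \<in> Cg g")
  case False
  thus ?thesis using sb by (simp add: star_def)
next
  case True
  define K where "K = {s..b} \<inter> - Cg g"
  have Kne: "K \<noteq> {}" using nb sb by (auto simp: K_def)
  have Kbdd: "bdd_below K" unfolding K_def by (rule bdd_belowI[of _ s]) auto
  have Kcl: "closed K" unfolding K_def using Cg_open by (intro closed_Int) auto
  define B where "B = Inf K"
  have BK: "B \<in> K" unfolding B_def using closed_contains_Inf[OF Kne Kbdd Kcl] .
  have Bs: "s \<le> B" unfolding B_def using Kne by (intro cInf_greatest) (auto simp: K_def)
  have sB: "s < B" using Bs BK True by (cases "s = B") (auto simp: K_def)
  have Bb: "B \<le> b" using BK by (auto simp: K_def)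
  have BnC: "B \<notin> Cg g" using BK by (auto simp: K_def)
  have sub: "{s..<B} \<subseteq> Cg g"
  proof
    fix x assume x: "x \<in> {s..<B}"
    show "x \<in> Cg g"
    proof (rule ccontr)
      assume "x \<notin> Cg g"
      hence "x \<in> K" using x Bb by (auto simp: K_def)
      hence "B \<le> x" unfolding B_def using Kbdd by (rule cInf_lower)
      thus False using x by auto
    qed
  qed
  have P: "s < B \<and> B \<notin> Cg g \<and> {s..<B} \<subseteq> Cg g" using sB BnC sub by auto
  have st0: "star g s = (THE b. s < b \<and> b \<notin> Cg g \<and> {s..<b} \<subseteq> Cg g)"
    using True by (simp add: star_def)
  have st1: "(THE b. s < b \<and> b \<notin> Cg g \<and> {s..<b} \<subseteq> Cg g) = B"
  proof (rule the_equality)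
    show "s < B \<and> B \<notin> Cg g \<and> {s..<B} \<subseteq> Cg g" by (rule P)
    fix c assume c: "s < c \<and> c \<notin> Cg g \<and> {s..<c} \<subseteq> Cg g"
    show "c = B"
    proof (rule ccontr)
      assume "c \<noteq> B"
      hence "c < B \<or> B < c" by auto
      thus False
      proof
        assume "c < B" hence "c \<in> {s..<B}" using c by auto
        thus False using P c by blast
      next
        assume "B < c" hence "B \<in> {s..<c}" using P by auto
        thus False using P c by blast
      qed
    qed
  qed
  have st: "star g s = B" using st0 st1 by simp
  obtain c where c: "\<forall>x\<in>{s..<B}. g x = c"
    using has_field_derivative_zero_constant[of "{s..<B}" g] sub Cg_deriv by blast
  have lim1: "(g \<longlongrightarrow> g B) (at_left B)" using lc by (simp add: continuous_within)
  have ev: "eventually (\<lambda>x. c = g x) (at_left B)"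
    unfolding eventually_at_left_field using sB c by (intro exI[of _ s]) auto
  have lim2: "(g \<longlongrightarrow> c) (at_left B)"
    by (rule Lim_transform_eventually[OF tendsto_const ev])
  have "g B = c" using tendsto_unique[OF _ lim1 lim2] by simp
  moreover have "g s = c" using c sB by auto
  ultimately show ?thesis using st sB Bb by auto
qed

lemma main_generic:
  fixes f :: "real \<Rightarrow> 'a::metric_space"
  assumes nb: "b \<notin> Cg g" and lc: "\<forall>t. continuous (at_left t) g"
    and fs: "g_continuous_on g {a..b} (\<lambda>s. f (star g s))"
  shows "g_continuous_on g {a..b} f \<longleftrightarrow>
               (\<forall>t\<in>{a..b}. \<forall>s\<in>{a..b}. g t = g s \<longrightarrow> f t = f s)"
proof
  assume H: "g_continuous_on g {a..b} f"
  show "\<forall>t\<in>{a..b}. \<forall>s\<in>{a..b}. g t = g s \<longrightarrow> f t = f s"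
  proof (intro ballI impI)
    fix t s assume t: "t \<in> {a..b}" and s: "s \<in> {a..b}" and e: "g t = g s"
    have "\<forall>\<epsilon>>0. dist (f t) (f s) < \<epsilon>"
    proof (intro allI impI)
      fix \<epsilon> :: real assume "\<epsilon> > 0"
      then obtain \<delta> where "\<delta> > 0" "\<forall>s\<in>{a..b}. \<bar>g t - g s\<bar> < \<delta> \<longrightarrow> dist (f t) (f s) < \<epsilon>"
        using H t unfolding g_continuous_on_def g_continuous_at_def by blast
      thus "dist (f t) (f s) < \<epsilon>" using s e by auto
    qed
    show "f t = f s"
    proof (rule ccontr)
      assume "f t \<noteq> f s"
      hence "dist (f t) (f s) > 0" by simp
      hence "dist (f t) (f s) < dist (f t) (f s)" using \<open>\<forall>\<epsilon>>0. dist (f t) (f s) < \<epsilon>\<close> by blast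
      thus False by simp
    qed
  qed
next
  assume H: "\<forall>t\<in>{a..b}. \<forall>s\<in>{a..b}. g t = g s \<longrightarrow> f t = f s"
  have eq: "\<And>s. s \<in> {a..b} \<Longrightarrow> f (star g s) = f s"
  proof -
    fix s assume s: "s \<in> {a..b}"
    have sp: "s \<le> star g s \<and> star g s \<le> b \<and> g (star g s) = g s"
      using star_props[OF nb _ lc, of s] s by simp
    have "star g s \<in> {a..b}" using sp s by simp
    thus "f (star g s) = f s" using H s sp by blast
  qed
  show "g_continuous_on g {a..b} f"
    unfolding g_continuous_on_def g_continuous_at_def
  proof (intro ballI allI impI)
    fix t and \<epsilon> :: real assume t: "t \<in> {a..b}" and e: "\<epsilon> > 0"
    then obtain \<delta> where d: "\<delta> > 0"
      "\<forall>s\<in>{a..b}. \<bar>g t - g s\<bar> < \<delta> \<longrightarrow> dist (f (star g t)) (f (star g s)) < \<epsilon>"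
      using fs unfolding g_continuous_on_def g_continuous_at_def by blast
    show "\<exists>\<delta>>0. \<forall>s\<in>{a..b}. \<bar>g t - g s\<bar> < \<delta> \<longrightarrow> dist (f t) (f s) < \<epsilon>"
      using d eq t by (intro exI[of _ \<delta>]) auto
  qed
qed

theorem proposition5p3:
  fixes g :: "real \<Rightarrow> real" and a b :: real
  assumes "mono g"
    and "\<forall>t. continuous (at_left t) g"
    and "a < b"
    and "a \<notin> Ng_minus g \<union> Dg g"
    and "b \<notin> Dg g \<union> Cg g \<union> Ng_plus g"
  shows "(\<forall>f :: real \<Rightarrow> real.
            g_continuous_on g {a..b} (\<lambda>s. f (star g s)) \<longrightarrow>
            (g_continuous_on g {a..b} f \<longleftrightarrow>
               (\<forall>t\<in>{a..b}. \<forall>s\<in>{a..b}. g t = g s \<longrightarrow> f t = f s)))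
       \<and> (\<forall>f :: real \<Rightarrow> complex.
            g_continuous_on g {a..b} (\<lambda>s. f (star g s)) \<longrightarrow>
            (g_continuous_on g {a..b} f \<longleftrightarrow>
               (\<forall>t\<in>{a..b}. \<forall>s\<in>{a..b}. g t = g s \<longrightarrow> f t = f s)))"
proof -
  have nb: "b \<notin> Cg g" using assms(5) by auto
  show ?thesis by (intro conjI allI impI main_generic[OF nb assms(2)])
qed

end
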